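(* Let $\Omega\subset\mathbb R^d$ be a connected bounded open set, $M>0$, and $a_k\in L^1(\Omega\times\Omega)$ non-negative with $\|a_k\|_{L^1(\Omega\times\Omega)}\le M$. Let $F_k(u)=\int_{\Omega\times\Omega}|u(x)-u(y)|^2a_k(x,y)\,dx\,dy+\int_\Omega|\nabla u|^2\,dx$ on $H^1_0(\Omega)$, assume $F_k$ $\Gamma$-converges in the weak topology of $H^1_0(\Omega)$ to $F$, and let $\mu,\nu$ be positive Radon measures on $\Omega\times\Omega$ and $\Omega$ such that $\mu$ is symmetric, $\mu((\Omega\times\Omega)\cap\Delta)=0$ with $\Delta=\{(x,x)\}$, and $F(u)=\int_{\Omega\times\Omega}|u(x)-u(y)|^2d\mu+\int_\Omega|u|^2d\nu+\int_\Omega|\nabla u|^2dx$ for all $u\in C^\infty_c(\Omega)$. Suppose moreover that for every $\varepsilon>0$ there exists a compact set $K_\varepsilon\subset\Omega$ such that $$\int_{(\Omega\times\Omega)\setminus(K_\varepsilon\times K_\varepsilon)}a_k(x,y)\,dx\,dy\le\varepsilon\quad\text{for every }k\in\mathbb N.$$ Then $\nu$ is the null measure.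
   Context: $\Gamma$-convergence in the weak topology of $H^1_0(\Omega)$ is understood in the usual sequential sense. A symmetric measure satisfies $\mu(A\times B)=\mu(B\times A)$ for all Borel $A,B\subset\Omega$. *)

theory Defs
  imports "HOL-Analysis.Analysis"
begin

definition pd :: "'d::finite \<Rightarrow> (real^'d \<Rightarrow> real) \<Rightarrow> real^'d \<Rightarrow> real" where
  "pd i f x = frechet_derivative f (at x) (axis i 1)"

fun Ck :: "nat \<Rightarrow> (real^'d::finite \<Rightarrow> real) set" where
  "Ck 0 = {f. continuous_on UNIV f}"
| "Ck (Suc n) = {f. f differentiable_on UNIV \<and> (\<forall>i. pd i f \<in> Ck n)}"

definition smooth_fun :: "(real^'d::finite \<Rightarrow> real) set" where
  "smooth_fun = (\<Inter>n. Ck n)"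

definition test_fun :: "(real^'d::finite) set \<Rightarrow> (real^'d \<Rightarrow> real) set" where
  "test_fun \<Omega> = {\<phi>. \<phi> \<in> smooth_fun \<and>
      (\<exists>K. compact K \<and> K \<subseteq> \<Omega> \<and> (\<forall>x. x \<notin> K \<longrightarrow> \<phi> x = 0))}"

definition grad :: "(real^'d::finite \<Rightarrow> real) \<Rightarrow> real^'d \<Rightarrow> real^'d" where
  "grad f x = (\<chi> i. pd i f x)"

definition L2_on :: "(real^'d::finite) set \<Rightarrow> (real^'d \<Rightarrow> real) \<Rightarrow> bool" where
  "L2_on \<Omega> u \<longleftrightarrow> u \<in> borel_measurable lborel \<and> set_integrable lborel \<Omega> (\<lambda>x. (u x)\<^sup>2)"

definition L2v_on :: "(real^'d::finite) set \<Rightarrow> (real^'d \<Rightarrow> real^'d) \<Rightarrow> bool" where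
  "L2v_on \<Omega> g \<longleftrightarrow> g \<in> borel_measurable lborel \<and> set_integrable lborel \<Omega> (\<lambda>x. (norm (g x))\<^sup>2)"

definition weak_grad :: "(real^'d::finite) set \<Rightarrow> (real^'d \<Rightarrow> real) \<Rightarrow> (real^'d \<Rightarrow> real^'d) \<Rightarrow> bool" where
  "weak_grad \<Omega> u g \<longleftrightarrow> (\<forall>\<phi>\<in>test_fun \<Omega>. \<forall>i.
      (LINT x:\<Omega>|lborel. u x * pd i \<phi> x) = - (LINT x:\<Omega>|lborel. g x $ i * \<phi> x))"

definition H1_0 :: "(real^'d::finite) set \<Rightarrow> (real^'d \<Rightarrow> real) set" where
  "H1_0 \<Omega> = {u. L2_on \<Omega> u \<and> (\<exists>g. weak_grad \<Omega> u g \<and> L2v_on \<Omega> g \<and>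
      (\<exists>\<phi>. (\<forall>n. \<phi> n \<in> test_fun \<Omega>) \<and>
        (\<lambda>n. LINT x:\<Omega>|lborel. (u x - \<phi> n x)\<^sup>2) \<longlonglongrightarrow> 0 \<and>
        (\<lambda>n. LINT x:\<Omega>|lborel. (norm (g x - grad (\<phi> n) x))\<^sup>2) \<longlonglongrightarrow> 0))}"

text \<open>The weak gradient of an H^1_0 function (unique a.e.).\<close>
definition wgrad :: "(real^'d::finite) set \<Rightarrow> (real^'d \<Rightarrow> real) \<Rightarrow> real^'d \<Rightarrow> real^'d" where
  "wgrad \<Omega> u = (SOME g. weak_grad \<Omega> u g \<and> L2v_on \<Omega> g)"

definition H1_inner :: "(real^'d::finite) set \<Rightarrow> (real^'d \<Rightarrow> real) \<Rightarrow> (real^'d \<Rightarrow> real) \<Rightarrow> real" where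
  "H1_inner \<Omega> u v = (LINT x:\<Omega>|lborel. u x * v x) + (LINT x:\<Omega>|lborel. wgrad \<Omega> u x \<bullet> wgrad \<Omega> v x)"

text \<open>Weak convergence in the Hilbert space H^1_0 (by Riesz representation,
  testing against all continuous linear functionals = testing against the scalar product).\<close>
definition weak_conv_H1_0 :: "(real^'d::finite) set \<Rightarrow> (nat \<Rightarrow> real^'d \<Rightarrow> real) \<Rightarrow> (real^'d \<Rightarrow> real) \<Rightarrow> bool" where
  "weak_conv_H1_0 \<Omega> us u \<longleftrightarrow> (\<forall>k. us k \<in> H1_0 \<Omega>) \<and> u \<in> H1_0 \<Omega> \<and>
     (\<forall>v\<in>H1_0 \<Omega>. (\<lambda>k. H1_inner \<Omega> (us k) v) \<longlonglongrightarrow> H1_inner \<Omega> u v)"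

definition Gamma_conv_weak_H1_0 :: "(real^'d::finite) set \<Rightarrow> (nat \<Rightarrow> (real^'d \<Rightarrow> real) \<Rightarrow> ennreal)
     \<Rightarrow> ((real^'d \<Rightarrow> real) \<Rightarrow> ennreal) \<Rightarrow> bool" where
  "Gamma_conv_weak_H1_0 \<Omega> Fk F \<longleftrightarrow>
     (\<forall>u\<in>H1_0 \<Omega>. \<forall>us. weak_conv_H1_0 \<Omega> us u \<longrightarrow> F u \<le> liminf (\<lambda>k. Fk k (us k))) \<and>
     (\<forall>u\<in>H1_0 \<Omega>. \<exists>us. weak_conv_H1_0 \<Omega> us u \<and> limsup (\<lambda>k. Fk k (us k)) \<le> F u)"

definition dirichlet :: "(real^'d::finite) set \<Rightarrow> (real^'d \<Rightarrow> real) \<Rightarrow> ennreal" where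
  "dirichlet \<Omega> u = (\<integral>\<^sup>+ x\<in>\<Omega>. ennreal ((norm (wgrad \<Omega> u x))\<^sup>2) \<partial>lborel)"

end

theory Submission
  imports Defs "HOL-Computational_Algebra.Polynomial"
begin


lemma pd_eq: "(f has_derivative f') (at x) \<Longrightarrow> pd i f x = f' (axis i 1)"
  unfolding pd_def using frechet_derivative_at by metis

lemma diff_at: "f differentiable_on UNIV \<Longrightarrow> (f has_derivative frechet_derivative f (at x)) (at x)"
  by (simp add: differentiable_on_def frechet_derivative_works)

lemma Ck_Suc_imp: "f \<in> Ck (Suc n) \<Longrightarrow> f \<in> Ck n"
proof (induction n arbitrary: f)
  case 0 then show ?case by (auto intro: differentiable_imp_continuous_on)
next
  case (Suc n) then show ?case by auto
qed

lemma Ck_le0: "f \<in> Ck (m + k) \<Longrightarrow> f \<in> Ck m"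
proof (induction k)
  case (Suc k) then show ?case using Ck_Suc_imp[of f "m + k"] by (simp del: Ck.simps)
qed simp

lemma Ck_le: "m \<le> n \<Longrightarrow> f \<in> Ck n \<Longrightarrow> f \<in> Ck m"
  using Ck_le0[of f m "n - m"] by simp

lemma diff_onI: "(\<And>x. (f has_derivative f' x) (at x)) \<Longrightarrow> f differentiable_on UNIV"
  by (auto simp: differentiable_on_def differentiable_def)

lemma Ck_cont: "f \<in> Ck n \<Longrightarrow> continuous_on UNIV f"
  using Ck_le[of 0 n f] by simp

lemma Ck_const: "(\<lambda>x. c) \<in> Ck n"
proof (induction n arbitrary: c)
  case 0 then show ?case by simp
next
  case (Suc n)
  have e: "pd i (\<lambda>x. c) = (\<lambda>x. 0)" for i by (rule ext) (simp add: pd_def)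
  show ?case by (simp add: e Suc.IH)
qed

lemma pd_add: "f differentiable_on UNIV \<Longrightarrow> g differentiable_on UNIV \<Longrightarrow>
  pd i (\<lambda>x. f x + g x) = (\<lambda>x. pd i f x + pd i g x)"
  by (rule ext, rule pd_eq[THEN trans], rule has_derivative_add[OF diff_at diff_at])
     (auto simp: pd_def)

lemma pd_mult: "f differentiable_on UNIV \<Longrightarrow> g differentiable_on UNIV \<Longrightarrow>
  pd i (\<lambda>x. f x * g x) = (\<lambda>x. f x * pd i g x + pd i f x * g x)"
  by (rule ext, rule pd_eq[THEN trans], rule has_derivative_mult[OF diff_at diff_at])
     (auto simp: pd_def)

lemma Ck_add: "f \<in> Ck n \<Longrightarrow> g \<in> Ck n \<Longrightarrow> (\<lambda>x. f x + g x) \<in> Ck n"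
proof (induction n arbitrary: f g)
  case 0 then show ?case by (auto intro: continuous_intros)
next
  case (Suc n)
  have "(\<lambda>x. f x + g x) differentiable_on UNIV"
    using Suc.prems by (intro differentiable_on_add) auto
  then show ?case using Suc by (auto simp: pd_add)
qed

lemma Ck_mult: "f \<in> Ck n \<Longrightarrow> g \<in> Ck n \<Longrightarrow> (\<lambda>x. f x * g x) \<in> Ck n"
proof (induction n arbitrary: f g)
  case 0 then show ?case by (auto intro: continuous_intros)
next
  case (Suc n)
  have f: "f \<in> Ck n" and g: "g \<in> Ck n" using Suc.prems Ck_Suc_imp by blast+
  have "(\<lambda>x. f x * g x) differentiable_on UNIV"
    using Suc.prems by (intro differentiable_on_mult) auto
  then show ?case using Suc f g by (auto simp: pd_mult intro!: Ck_add)
qed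

lemma Ck_uminus: "f \<in> Ck n \<Longrightarrow> (\<lambda>x. - f x) \<in> Ck n"
  using Ck_mult[OF Ck_const[of "-1"], of f n] by simp

lemma Ck_diff: "f \<in> Ck n \<Longrightarrow> g \<in> Ck n \<Longrightarrow> (\<lambda>x. f x - g x) \<in> Ck n"
  using Ck_add[OF _ Ck_uminus, of f n g] by simp

lemma Ck_inverse: "f \<in> Ck n \<Longrightarrow> (\<And>x. f x \<noteq> 0) \<Longrightarrow> (\<lambda>x. inverse (f x)) \<in> Ck n"
proof (induction n arbitrary: f)
  case 0 then show ?case by (auto intro!: continuous_intros)
next
  case (Suc n)
  have f: "f \<in> Ck n" using Suc.prems Ck_Suc_imp by blast
  have fd: "f differentiable_on UNIV" using Suc.prems by simp
  have pdi: "pd i (\<lambda>x. inverse (f x)) = (\<lambda>x. (-1) * (inverse (f x) * pd i f x * inverse (f x)))" for i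
    by (rule ext, rule pd_eq[THEN trans], rule Deriv.has_derivative_inverse[OF Suc.prems(2) diff_at[OF fd]])
      (auto simp: pd_def)
  have inv: "(\<lambda>x. inverse (f x)) \<in> Ck n" using Suc.IH[OF f] Suc.prems by blast
  have dif: "(\<lambda>x. inverse (f x)) differentiable_on UNIV"
    using fd Suc.prems(2) by (intro differentiable_on_inverse) auto
  show ?case using Suc.prems inv dif by (auto simp: pdi intro!: Ck_mult Ck_const Ck_uminus)
qed

lemma Ck_compose:
  assumes D: "\<And>m t. (D m has_real_derivative D (Suc m) t) (at t)"
  shows "g \<in> Ck n \<Longrightarrow> (\<lambda>x. D 0 (g x)) \<in> Ck n"
  using D
proof (induction n arbitrary: g D)
  case 0
  have "continuous_on UNIV (D 0)"
    using 0(2) by (meson DERIV_isCont continuous_at_imp_continuous_on)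
  then show ?case using 0(1) by (auto intro: continuous_on_compose2[of UNIV "D 0" UNIV g])
next
  case (Suc n)
  have g: "g \<in> Ck n" using Suc.prems Ck_Suc_imp by blast
  have gd: "g differentiable_on UNIV" using Suc.prems by simp
  have hd: "((\<lambda>x. D 0 (g x)) has_derivative (\<lambda>h. frechet_derivative g (at x) h * D (Suc 0) (g x))) (at x)" for x
    by (rule DERIV_compose_FDERIV[OF Suc.prems(2) diff_at[OF gd]])
  have pdi: "pd i (\<lambda>x. D 0 (g x)) = (\<lambda>x. pd i g x * D 1 (g x))" for i
    by (rule ext, rule pd_eq[THEN trans, OF hd]) (simp add: pd_def)
  have c1: "(\<lambda>x. D (Suc 0 + 0) (g x)) \<in> Ck n"
    using Suc.IH[OF g, of "\<lambda>m. D (Suc m)"] Suc.prems(2) by simp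
  have dif: "(\<lambda>x. D 0 (g x)) differentiable_on UNIV"
    using hd by (auto simp: differentiable_on_def differentiable_def)
  show ?case using Suc.prems c1 dif by (auto simp: pdi intro!: Ck_mult)
qed

lemma Ck_sum: "finite A \<Longrightarrow> (\<And>a. a \<in> A \<Longrightarrow> f a \<in> Ck n) \<Longrightarrow> (\<lambda>x. \<Sum>a\<in>A. f a x) \<in> Ck n"
  by (induction A rule: finite_induct) (auto intro: Ck_const Ck_add)

lemma Ck_coord: "(\<lambda>x::real^'d::finite. x $ j) \<in> Ck n"
proof (induction n)
  case 0 then show ?case by (auto intro: continuous_intros)
next
  case (Suc n)
  have hd: "((\<lambda>x::real^'d. x $ j) has_derivative (\<lambda>h. h $ j)) (at x)" for x
    by (rule bounded_linear_imp_has_derivative) (rule bounded_linear_vec_nth)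
  have pdi: "pd i (\<lambda>x::real^'d. x $ j) = (\<lambda>x. axis i 1 $ j)" for i
    by (rule ext, rule pd_eq[OF hd])
  show ?case using hd by (auto simp: pdi Ck_const differentiable_on_def differentiable_def)
qed

lemma smooth_iff: "f \<in> smooth_fun \<longleftrightarrow> (\<forall>n. f \<in> Ck n)"
  by (simp add: smooth_fun_def)



fun Pp :: "nat \<Rightarrow> real poly" where
  "Pp 0 = 1"
| "Pp (Suc m) = [:0,0,1:] * (Pp m - pderiv (Pp m))"

definition psiD :: "nat \<Rightarrow> real \<Rightarrow> real" where
  "psiD m t = (if 0 < t then poly (Pp m) (1/t) * exp (-(1/t)) else 0)"

lemma lim_poly_exp: "((\<lambda>s. poly p s * s^k / exp s) \<longlongrightarrow> (0::real)) at_top"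
proof (induction p arbitrary: k rule: pCons_induct)
  case 0 then show ?case by simp
next
  case (pCons a p)
  have "((\<lambda>s. a * (s^k / exp s) + poly p s * s^Suc k / exp s) \<longlongrightarrow> a * 0 + 0) at_top"
    by (intro tendsto_add tendsto_mult tendsto_const tendsto_power_div_exp_0 pCons.IH)
  moreover have "(\<lambda>s. a * (s^k / exp s) + poly p s * s^Suc k / exp s) = (\<lambda>s. poly (pCons a p) s * s^k / exp s)"
    by (rule ext) (simp add: algebra_simps add_divide_distrib)
  ultimately show ?case by simp
qed

lemma psiD_deriv: "(psiD m has_real_derivative psiD (Suc m) t) (at t)"
proof -
  consider "t > 0" | "t < 0" | "t = 0" by linarith
  then show ?thesis
  proof cases
    case 1
    let ?P = "Pp m"
    have i: "DERIV (\<lambda>t. 1/t) t :> -(1/t^2)"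
      using DERIV_inverse[of t] 1 by (simp add: divide_inverse power2_eq_square power_inverse)
    have p: "DERIV (\<lambda>t. poly ?P (1/t)) t :> poly (pderiv ?P) (1/t) * (-(1/t^2))"
      by (rule DERIV_chain2[OF poly_DERIV i])
    have ex: "DERIV (\<lambda>t. exp (-(1/t))) t :> exp (-(1/t)) * (-(-(1/t^2)))"
      by (rule DERIV_chain2[OF DERIV_exp DERIV_minus[OF i]])
    have d: "((\<lambda>t. poly ?P (1/t) * exp (-(1/t))) has_real_derivative
       poly (pderiv ?P) (1/t) * (-(1/t^2)) * exp (-(1/t)) + poly ?P (1/t) * (exp (-(1/t)) * (1/t^2))) (at t)"
      using DERIV_mult[OF p ex] by (simp add: algebra_simps)
    have e: "poly (pderiv ?P) (1/t) * (-(1/t^2)) * exp (-(1/t)) + poly ?P (1/t) * (exp (-(1/t)) * (1/t^2))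
       = psiD (Suc m) t"
      using 1 by (simp add: psiD_def algebra_simps power2_eq_square)
    show ?thesis
      by (rule has_field_derivative_transform_within_open[OF d[unfolded e], of "{0<..}"])
         (use 1 in \<open>auto simp: psiD_def\<close>)
  next
    case 2
    have "((\<lambda>t. 0) has_real_derivative 0) (at t)" by simp
    then have "(psiD m has_real_derivative 0) (at t)"
      by (rule has_field_derivative_transform_within_open[of _ _ _ "{..<0}"])
         (use 2 in \<open>auto simp: psiD_def\<close>)
    moreover have "psiD (Suc m) t = 0" using 2 by (simp add: psiD_def)
    ultimately show ?thesis by simp
  next
    case 3
    have "((\<lambda>h. (psiD m (0 + h) - psiD m 0) / h) \<longlongrightarrow> 0) (at 0)"
    proof (rule filterlim_split_at)
      show "((\<lambda>h. (psiD m (0 + h) - psiD m 0) / h) \<longlongrightarrow> 0) (at_left 0)"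
        by (rule tendsto_eventually) (auto simp: psiD_def eventually_at_left_field intro: exI[of _ "-1"])
      have g: "((\<lambda>h. poly (Pp m) (inverse h) * (inverse h)^1 / exp (inverse h)) \<longlongrightarrow> 0) (at_right 0)"
        by (rule filterlim_compose[OF lim_poly_exp filterlim_inverse_at_top_right])
      show "((\<lambda>h. (psiD m (0 + h) - psiD m 0) / h) \<longlongrightarrow> 0) (at_right 0)"
        apply (rule tendsto_cong[THEN iffD1, OF _ g])
        apply (auto simp: psiD_def eventually_at_right_field exp_minus field_simps intro!: exI[of _ 1])
        done
    qed
    then show ?thesis using 3 by (simp add: DERIV_def psiD_def)
  qed
qed



definition stepf :: "real \<Rightarrow> real" where
  "stepf t = psiD 0 t * inverse (psiD 0 t + psiD 0 (1 - t))"

lemma psi0: "psiD 0 t = (if 0 < t then exp (-(1/t)) else 0)"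
  by (simp add: psiD_def)

lemma psi_pos: "psiD 0 t + psiD 0 (1 - t) > 0"
  by (auto simp: psi0 add_pos_nonneg add_nonneg_pos)

lemma stepf_bounds: "0 \<le> stepf t" "stepf t \<le> 1"
  using psi_pos[of t] by (auto simp: stepf_def psi0 field_simps)

lemma stepf_0: "t \<le> 0 \<Longrightarrow> stepf t = 0"
  by (simp add: stepf_def psi0)

lemma stepf_1: "t \<ge> 1 \<Longrightarrow> stepf t = 1"
  by (simp add: stepf_def psi0)

lemma Ck_stepf: "g \<in> Ck n \<Longrightarrow> (\<lambda>x. stepf (g x)) \<in> Ck n"
proof -
  assume g: "g \<in> Ck n"
  have a: "(\<lambda>x. psiD 0 (g x)) \<in> Ck n" by (rule Ck_compose[of psiD, OF psiD_deriv g])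
  have b: "(\<lambda>x. psiD 0 (1 - g x)) \<in> Ck n" by (rule Ck_compose[of psiD, OF psiD_deriv Ck_diff[OF Ck_const g]])
  have c: "(\<lambda>x. inverse (psiD 0 (g x) + psiD 0 (1 - g x))) \<in> Ck n"
    by (rule Ck_inverse[OF Ck_add[OF a b]]) (use psi_pos in \<open>simp add: less_le\<close>)
  show ?thesis unfolding stepf_def by (rule Ck_mult[OF a c])
qed

definition sqd :: "real^'d::finite \<Rightarrow> real^'d \<Rightarrow> real" where
  "sqd c x = (\<Sum>i\<in>UNIV. (x$i - c$i) * (x$i - c$i))"

lemma sqd_dist: "sqd c x = dist x c ^ 2"
  by (simp add: sqd_def dist_norm power2_norm_eq_inner inner_vec_def)

lemma Ck_sqd: "sqd c \<in> Ck n"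
  unfolding sqd_def
  by (rule Ck_sum) (auto intro!: Ck_mult Ck_diff Ck_coord Ck_const)

lemma cutoff:
  fixes K \<Omega> :: "(real^'d::finite) set"
  assumes "open \<Omega>" "compact K" "K \<subseteq> \<Omega>"
  obtains u L where "u \<in> smooth_fun" "compact L" "L \<subseteq> \<Omega>" "\<And>x. x \<notin> L \<Longrightarrow> u x = 0"
    "\<And>x. 0 \<le> u x" "\<And>x. u x \<le> 1" "\<And>x. x \<in> K \<Longrightarrow> u x = 1"
proof -
  have "\<forall>c\<in>K. \<exists>e>0. cball c e \<subseteq> \<Omega>"
    using assms open_contains_cball by blast
  then obtain r where r: "\<And>c. c \<in> K \<Longrightarrow> r c > 0 \<and> cball c (r c) \<subseteq> \<Omega>" by metis
  have "K \<subseteq> (\<Union>c\<in>K. ball c (r c / 2))"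
    using r by force
  then obtain C where C: "C \<subseteq> K" "finite C" "K \<subseteq> (\<Union>c\<in>C. ball c (r c / 2))"
    using compactE_image[OF assms(2), of K "\<lambda>c. ball c (r c / 2)"] by blast
  define q where "q c x = (r c ^ 2 - sqd c x) * (4 / (3 * r c ^ 2))" for c x
  define u where "u x = stepf (\<Sum>c\<in>C. stepf (q c x))" for x
  define L where "L = (\<Union>c\<in>C. cball c (r c))"
  show ?thesis
  proof
    have qk: "q c \<in> Ck n" for c n unfolding q_def
      by (intro Ck_mult Ck_diff Ck_const Ck_sqd)
    show "u \<in> smooth_fun" unfolding smooth_iff u_def
      by (intro allI Ck_stepf Ck_sum[OF C(2)] qk)
    show "compact L" unfolding L_def using C by auto
    show "L \<subseteq> \<Omega>" unfolding L_def using C r by blast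
    show "0 \<le> u x" "u x \<le> 1" for x unfolding u_def by (rule stepf_bounds)+
  next
    fix x assume x: "x \<notin> L"
    have "q c x \<le> 0" if "c \<in> C" for c
    proof -
      have "dist x c > r c" using x that unfolding L_def by (auto simp: dist_commute)
      moreover have "r c > 0" using r that C by auto
      ultimately have "sqd c x \<ge> r c ^ 2" unfolding sqd_dist
        by (intro power_mono) auto
      then show ?thesis unfolding q_def using \<open>r c > 0\<close>
        by (intro mult_nonpos_nonneg) auto
    qed
    then show "u x = 0" unfolding u_def by (simp add: stepf_0)
  next
    fix x assume x: "x \<in> K"
    then obtain c where c: "c \<in> C" "dist x c < r c / 2" using C by (auto simp: dist_commute)
    have rc: "r c > 0" using r c C by auto
    have "sqd c x < (r c / 2) ^ 2" unfolding sqd_dist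
      using c by (intro power_strict_mono) auto
    then have "q c x \<ge> 1" unfolding q_def using rc
      by (simp add: field_simps power2_eq_square)
    then have "stepf (q c x) = 1" by (rule stepf_1)
    moreover have "stepf (q c x) \<le> (\<Sum>c\<in>C. stepf (q c x))"
      by (rule member_le_sum) (use c C stepf_bounds in auto)
    ultimately show "u x = 1" unfolding u_def by (simp add: stepf_1)
  qed
qed



lemma pd_zero_outside:
  assumes "closed L" "\<And>x. x \<notin> L \<Longrightarrow> f x = 0" "x \<notin> L"
  shows "pd i f x = 0"
proof -
  have "((\<lambda>y. 0) has_derivative (\<lambda>h. 0)) (at x)" by simp
  then have "(f has_derivative (\<lambda>h. 0)) (at x)"
    by (rule has_derivative_transform_within_open[of _ _ _ _ "-L"]) (use assms in auto)
  then show ?thesis by (simp add: pd_eq)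
qed

lemma integrable_cs:
  fixes g :: "real^'d::finite \<Rightarrow> real"
  assumes "continuous_on UNIV g" "compact L" "\<And>x. x \<notin> L \<Longrightarrow> g x = 0"
  shows "integrable lborel g"
proof -
  have "integrable lborel (\<lambda>x. indicator L x *\<^sub>R g x)"
    by (rule borel_integrable_compact) (auto intro: continuous_on_subset assms)
  moreover have "(\<lambda>x. indicator L x *\<^sub>R g x) = g"
  proof
    fix x show "indicator L x *\<^sub>R g x = g x" by (cases "x \<in> L") (auto simp: assms(3))
  qed
  ultimately show ?thesis by simp
qed

lemma line_deriv:
  fixes f :: "real^'d::finite \<Rightarrow> real"
  assumes "f differentiable_on UNIV"
  shows "((\<lambda>s. f (x + s *\<^sub>R axis i 1)) has_real_derivative pd i f (x + s *\<^sub>R axis i 1)) (at s)"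
proof -
  let ?e = "axis i 1 :: real^'d"
  let ?y = "x + s *\<^sub>R ?e"
  have lin: "((\<lambda>s. x + s *\<^sub>R ?e) has_derivative (\<lambda>h. h *\<^sub>R ?e)) (at s)"
    by (auto intro!: derivative_eq_intros)
  have f': "(f has_derivative frechet_derivative f (at ?y)) (at ?y)" by (rule diff_at[OF assms])
  have c: "((f \<circ> (\<lambda>s. x + s *\<^sub>R ?e)) has_derivative (frechet_derivative f (at ?y) \<circ> (\<lambda>h. h *\<^sub>R ?e))) (at s)"
    by (rule diff_chain_at[OF lin f'])
  have eq: "(frechet_derivative f (at ?y) \<circ> (\<lambda>h. h *\<^sub>R ?e)) = (*) (pd i f ?y)"
    using linear_cmul[OF has_derivative_linear[OF f']] by (auto simp: pd_def)
  show ?thesis using c unfolding has_field_derivative_def eq by (simp add: comp_def)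
qed

lemma ibp_zero:
  fixes f :: "real^'d::finite \<Rightarrow> real"
  assumes fd: "f differentiable_on UNIV" and pc: "continuous_on UNIV (pd i f)"
    and L: "compact L" and fz: "\<And>x. x \<notin> L \<Longrightarrow> f x = 0"
  shows "integral\<^sup>L lborel (pd i f) = 0"
proof -
  let ?e = "axis i 1 :: real^'d"
  have fc: "continuous_on UNIV f" using fd by (rule differentiable_imp_continuous_on)
  have pz: "x \<notin> L \<Longrightarrow> pd i f x = 0" for x
    using pd_zero_outside[of L f, OF compact_imp_closed[OF L] fz] by blast
  have "bounded (pd i f ` L)"
    by (rule compact_imp_bounded, rule compact_continuous_image[OF continuous_on_subset[OF pc] L]) auto
  then obtain B0 where B0: "\<And>x. x \<in> L \<Longrightarrow> \<bar>pd i f x\<bar> \<le> B0" by (auto simp: bounded_iff)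
  define B where "B = max B0 0"
  have B: "\<bar>pd i f x\<bar> \<le> B" for x
    using B0[of x] pz[of x] by (cases "x \<in> L") (auto simp: B_def)
  obtain R c0 where R: "L \<subseteq> cball c0 R" "0 \<le> R"
    using compact_imp_bounded[OF L] by (auto simp: bounded_subset_cball)
  define t where "t n = inverse (real (Suc n))" for n
  have t: "0 < t n" "t n \<le> 1" for n by (auto simp: t_def field_simps)
  define h where "h n x = (f (x + t n *\<^sub>R ?e) - f x) / t n" for n x
  have fint: "integrable lborel f" by (rule integrable_cs[OF fc L fz])
  have meas_plus: "((+) c) \<in> measurable lborel borel" for c :: "real^'d"
    by simp
  have fm: "f \<in> borel_measurable borel" by (rule borel_measurable_continuous_onI[OF fc])
  have trans_int: "integrable lborel (\<lambda>x. f (c + x))" for c :: "real^'d"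
    using integrable_distr_eq[OF meas_plus fm, of c] fint by (simp add: lborel_distr_plus)
  have trans_eq: "integral\<^sup>L lborel (\<lambda>x. f (c + x)) = integral\<^sup>L lborel f" for c :: "real^'d"
    using integral_distr[OF meas_plus fm, of c] by (simp add: lborel_distr_plus)
  have hint0: "integral\<^sup>L lborel (h n) = 0" for n
  proof -
    have "integral\<^sup>L lborel (h n) = (integral\<^sup>L lborel (\<lambda>x. f (t n *\<^sub>R ?e + x)) - integral\<^sup>L lborel f) / t n"
    proof -
      have "integral\<^sup>L lborel (h n) = integral\<^sup>L lborel (\<lambda>x. f (t n *\<^sub>R ?e + x) - f x) / t n"
        unfolding h_def by (simp add: add.commute)
      also have "\<dots> = (integral\<^sup>L lborel (\<lambda>x. f (t n *\<^sub>R ?e + x)) - integral\<^sup>L lborel f) / t n"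
        by (subst Bochner_Integration.integral_diff[OF trans_int fint]) (rule refl)
      finally show ?thesis .
    qed
    then show ?thesis using t(1)[of n] by (simp add: trans_eq)
  qed
  have hm: "h n \<in> borel_measurable lborel" for n
    using t(1)[of n] unfolding h_def by (auto intro!: borel_measurable_continuous_onI continuous_intros fc[THEN continuous_on_compose2] simp: measurable_lborel1)
  have pm: "pd i f \<in> borel_measurable lborel"
    using borel_measurable_continuous_onI[OF pc] by simp
  have wint: "integrable lborel (\<lambda>x. indicator (cball c0 (R + 1)) x *\<^sub>R B)"
    by (rule borel_integrable_compact) auto
  have lim: "(\<lambda>n. h n x) \<longlonglongrightarrow> pd i f x" for x
  proof -
    have "((\<lambda>s. (f (x + (0 + s) *\<^sub>R ?e) - f (x + 0 *\<^sub>R ?e)) / s) \<longlongrightarrow> pd i f (x + 0 *\<^sub>R ?e)) (at 0)"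
      using line_deriv[OF fd, of x i 0] unfolding DERIV_def by simp
    then have d: "((\<lambda>s. (f (x + s *\<^sub>R ?e) - f x) / s) \<longlongrightarrow> pd i f x) (at 0)" by simp
    have "filterlim t (at 0) sequentially"
      unfolding filterlim_at using t LIMSEQ_inverse_real_of_nat
      by (auto simp: t_def[abs_def] less_le intro!: always_eventually)
    from filterlim_compose[OF d this] show ?thesis by (simp add: h_def)
  qed
  have bound: "norm (h n x) \<le> indicator (cball c0 (R + 1)) x *\<^sub>R B" for n x
  proof -
    have "\<exists>z. 0 < z \<and> z < t n \<and> f (x + t n *\<^sub>R ?e) - f (x + 0 *\<^sub>R ?e) = (t n - 0) * pd i f (x + z *\<^sub>R ?e)"
      by (rule MVT2[OF t(1)]) (rule line_deriv[OF fd])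
    then obtain z where z: "f (x + t n *\<^sub>R ?e) - f x = t n * pd i f (x + z *\<^sub>R ?e)" by auto
    have hb: "\<bar>h n x\<bar> \<le> B" using z B[of "x + z *\<^sub>R ?e"] t[of n] by (simp add: h_def)
    show ?thesis
    proof (cases "x \<in> cball c0 (R + 1)")
      case True then show ?thesis using hb by simp
    next
      case False
      then have dx: "dist c0 x > R + 1" by simp
      have "x \<notin> L" using dx R by auto
      moreover have "x + t n *\<^sub>R ?e \<notin> L"
      proof
        assume "x + t n *\<^sub>R ?e \<in> L"
        then have "dist c0 (x + t n *\<^sub>R ?e) \<le> R" using R by auto
        moreover have "dist x (x + t n *\<^sub>R ?e) \<le> 1" using t[of n] by (simp add: dist_norm)
        ultimately show False using dx dist_triangle[of c0 x "x + t n *\<^sub>R ?e"]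
          by (simp add: dist_commute)
      qed
      ultimately show ?thesis using False by (simp add: h_def fz)
    qed
  qed
  have "(\<lambda>n. integral\<^sup>L lborel (h n)) \<longlonglongrightarrow> integral\<^sup>L lborel (pd i f)"
    by (rule integral_dominated_convergence[OF pm hm wint]) (use lim bound in \<open>auto intro!: always_eventually\<close>)
  then show ?thesis using hint0 by (simp add: LIMSEQ_const_iff)
qed



lemma smooth_facts:
  assumes "u \<in> smooth_fun"
  shows "u differentiable_on UNIV" "continuous_on UNIV u" "\<And>i. continuous_on UNIV (pd i u)"
    "\<And>i. pd i u \<in> smooth_fun"
proof -
  have "u \<in> Ck (Suc 0)" using assms by (simp add: smooth_iff del: Ck.simps)
  then show "u differentiable_on UNIV" "\<And>i. continuous_on UNIV (pd i u)" by auto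
  then show "continuous_on UNIV u" using differentiable_imp_continuous_on by blast
  show "pd i u \<in> smooth_fun" for i unfolding smooth_iff
  proof
    fix n have "u \<in> Ck (Suc n)" using assms by (simp add: smooth_iff del: Ck.simps)
    then show "pd i u \<in> Ck n" by simp
  qed
qed

lemma test_fun_H1:
  fixes \<Omega> :: "(real^'d::finite) set"
  assumes u: "u \<in> test_fun \<Omega>"
  shows "u \<in> H1_0 \<Omega>" "weak_grad \<Omega> u (grad u)" "L2v_on \<Omega> (grad u)"
proof -
  obtain Lu where Lu: "compact Lu" "Lu \<subseteq> \<Omega>" "\<And>x. x \<notin> Lu \<Longrightarrow> u x = 0" and us: "u \<in> smooth_fun"
    using u unfolding test_fun_def by auto
  note uf = smooth_facts[OF us]
  have pdz: "x \<notin> Lu \<Longrightarrow> pd i u x = 0" for x i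
    using pd_zero_outside[of Lu u, OF compact_imp_closed[OF Lu(1)] Lu(3)] by blast
  have gc: "continuous_on UNIV (grad u)" unfolding grad_def by (intro continuous_intros uf)
  have gz: "x \<notin> Lu \<Longrightarrow> grad u x = 0" for x by (simp add: grad_def pdz vec_eq_iff)
  show wg: "weak_grad \<Omega> u (grad u)"
    unfolding weak_grad_def
  proof (intro ballI allI)
    fix \<phi> i assume \<phi>: "\<phi> \<in> test_fun \<Omega>"
    obtain Lp where Lp: "compact Lp" "Lp \<subseteq> \<Omega>" "\<And>x. x \<notin> Lp \<Longrightarrow> \<phi> x = 0" and ps: "\<phi> \<in> smooth_fun"
      using \<phi> unfolding test_fun_def by auto
    note pf = smooth_facts[OF ps]
    have e1: "(LINT x:\<Omega>|lborel. u x * pd i \<phi> x) = integral\<^sup>L lborel (\<lambda>x. u x * pd i \<phi> x)"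
      unfolding set_lebesgue_integral_def
    proof (rule Bochner_Integration.integral_cong[OF refl])
      fix x show "indicator \<Omega> x *\<^sub>R (u x * pd i \<phi> x) = u x * pd i \<phi> x"
        using Lu by (cases "x \<in> \<Omega>") auto
    qed
    have e2: "(LINT x:\<Omega>|lborel. grad u x $ i * \<phi> x) = integral\<^sup>L lborel (\<lambda>x. pd i u x * \<phi> x)"
      unfolding set_lebesgue_integral_def
    proof (rule Bochner_Integration.integral_cong[OF refl])
      fix x show "indicator \<Omega> x *\<^sub>R (grad u x $ i * \<phi> x) = pd i u x * \<phi> x"
        using Lp by (cases "x \<in> \<Omega>") (auto simp: grad_def)
    qed
    have i1: "integrable lborel (\<lambda>x. u x * pd i \<phi> x)"
      by (rule integrable_cs[OF _ Lu(1)]) (auto intro!: continuous_intros uf pf simp: Lu(3))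
    have i2: "integrable lborel (\<lambda>x. pd i u x * \<phi> x)"
      by (rule integrable_cs[OF _ Lp(1)]) (auto intro!: continuous_intros uf pf simp: Lp(3))
    have pdm: "pd i (\<lambda>x. u x * \<phi> x) = (\<lambda>x. u x * pd i \<phi> x + pd i u x * \<phi> x)"
      by (rule pd_mult[OF uf(1) pf(1)])
    have "integral\<^sup>L lborel (pd i (\<lambda>x. u x * \<phi> x)) = 0"
      by (rule ibp_zero[OF _ _ Lu(1)])
         (auto simp: pdm Lu(3) intro!: continuous_intros uf pf differentiable_on_mult)
    then have "integral\<^sup>L lborel (\<lambda>x. u x * pd i \<phi> x) + integral\<^sup>L lborel (\<lambda>x. pd i u x * \<phi> x) = 0"
      unfolding pdm by (simp add: Bochner_Integration.integral_add[OF i1 i2])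
    then show "(LINT x:\<Omega>|lborel. u x * pd i \<phi> x) = - (LINT x:\<Omega>|lborel. grad u x $ i * \<phi> x)"
      unfolding e1 e2 by linarith
  qed
  have gm: "grad u \<in> borel_measurable lborel"
    using borel_measurable_continuous_onI[OF gc] by simp
  have "integrable lborel (\<lambda>x. indicator \<Omega> x *\<^sub>R (norm (grad u x))\<^sup>2)"
  proof -
    have "integrable lborel (\<lambda>x. (norm (grad u x))\<^sup>2)"
      by (rule integrable_cs[OF _ Lu(1)]) (auto intro!: continuous_intros gc simp: gz)
    moreover have "(\<lambda>x. indicator \<Omega> x *\<^sub>R (norm (grad u x))\<^sup>2) = (\<lambda>x. (norm (grad u x))\<^sup>2)"
    proof
      fix x show "indicator \<Omega> x *\<^sub>R (norm (grad u x))\<^sup>2 = (norm (grad u x))\<^sup>2"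
        using Lu gz[of x] by (cases "x \<in> \<Omega>") auto
    qed
    ultimately show ?thesis by simp
  qed
  then show l2v: "L2v_on \<Omega> (grad u)" unfolding L2v_on_def set_integrable_def using gm by simp
  have um: "u \<in> borel_measurable lborel"
    using borel_measurable_continuous_onI[OF uf(2)] by simp
  have "integrable lborel (\<lambda>x. indicator \<Omega> x *\<^sub>R (u x)\<^sup>2)"
  proof -
    have "integrable lborel (\<lambda>x. (u x)\<^sup>2)"
      by (rule integrable_cs[OF _ Lu(1)]) (auto intro!: continuous_intros uf simp: Lu(3))
    moreover have "(\<lambda>x. indicator \<Omega> x *\<^sub>R (u x)\<^sup>2) = (\<lambda>x. (u x)\<^sup>2)"
    proof
      fix x show "indicator \<Omega> x *\<^sub>R (u x)\<^sup>2 = (u x)\<^sup>2"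
        using Lu by (cases "x \<in> \<Omega>") auto
    qed
    ultimately show ?thesis by simp
  qed
  then have l2: "L2_on \<Omega> u" unfolding L2_on_def set_integrable_def using um by simp
  show "u \<in> H1_0 \<Omega>" unfolding H1_0_def
    using l2 wg l2v u by (auto intro!: exI[of _ "grad u"] exI[of _ "\<lambda>n. u"])
qed



theorem proposition2p7:
  fixes \<Omega> :: "(real^'d::finite) set"
    and M :: real
    and a :: "nat \<Rightarrow> ((real^'d) \<times> (real^'d)) \<Rightarrow> real"
    and F :: "(real^'d \<Rightarrow> real) \<Rightarrow> ennreal"
    and \<mu> :: "((real^'d) \<times> (real^'d)) measure"
    and \<nu> :: "(real^'d) measure"
  assumes \<Omega>_open: "open \<Omega>" and \<Omega>_conn: "connected \<Omega>" and \<Omega>_bdd: "bounded \<Omega>"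
    and M_pos: "M > 0"
    and a_int: "\<And>k. set_integrable (lborel \<Otimes>\<^sub>M lborel) (\<Omega> \<times> \<Omega>) (a k)"
    and a_nonneg: "\<And>k z. z \<in> \<Omega> \<times> \<Omega> \<Longrightarrow> a k z \<ge> 0"
    and a_bound: "\<And>k. (\<integral>\<^sup>+ z\<in>\<Omega> \<times> \<Omega>. ennreal (a k z) \<partial>(lborel \<Otimes>\<^sub>M lborel)) \<le> ennreal M"
    and Gamma: "Gamma_conv_weak_H1_0 \<Omega>
        (\<lambda>k u. (\<integral>\<^sup>+ z\<in>\<Omega> \<times> \<Omega>. ennreal ((u (fst z) - u (snd z))\<^sup>2 * a k z) \<partial>(lborel \<Otimes>\<^sub>M lborel))
               + dirichlet \<Omega> u) F"
    and \<mu>_sets: "sets \<mu> = sets (restrict_space borel (\<Omega> \<times> \<Omega>))"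
    and \<mu>_radon: "\<And>K. compact K \<Longrightarrow> K \<subseteq> \<Omega> \<times> \<Omega> \<Longrightarrow> emeasure \<mu> K < \<infinity>"
    and \<mu>_sym: "\<And>A B. A \<in> sets borel \<Longrightarrow> B \<in> sets borel \<Longrightarrow> A \<subseteq> \<Omega> \<Longrightarrow> B \<subseteq> \<Omega> \<Longrightarrow>
        emeasure \<mu> (A \<times> B) = emeasure \<mu> (B \<times> A)"
    and \<mu>_diag: "emeasure \<mu> {(x, x) | x. x \<in> \<Omega>} = 0"
    and \<nu>_sets: "sets \<nu> = sets (restrict_space borel \<Omega>)"
    and \<nu>_radon: "\<And>K. compact K \<Longrightarrow> K \<subseteq> \<Omega> \<Longrightarrow> emeasure \<nu> K < \<infinity>"
    and F_repr: "\<And>u. u \<in> test_fun \<Omega> \<Longrightarrow>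
        F u = (\<integral>\<^sup>+ z. ennreal ((u (fst z) - u (snd z))\<^sup>2) \<partial>\<mu>)
            + (\<integral>\<^sup>+ x. ennreal ((u x)\<^sup>2) \<partial>\<nu>) + dirichlet \<Omega> u"
    and tight: "\<And>\<epsilon>. \<epsilon> > 0 \<Longrightarrow> \<exists>K. compact K \<and> K \<subseteq> \<Omega> \<and>
        (\<forall>k. (\<integral>\<^sup>+ z\<in>(\<Omega> \<times> \<Omega>) - (K \<times> K). ennreal (a k z) \<partial>(lborel \<Otimes>\<^sub>M lborel)) \<le> ennreal \<epsilon>)"
  shows "\<forall>A\<in>sets \<nu>. emeasure \<nu> A = 0"
proof -
  have \<Omega>b: "\<Omega> \<in> sets borel" using \<Omega>_open by simp
  have nu_iff: "A \<in> sets \<nu> \<longleftrightarrow> A \<subseteq> \<Omega> \<and> A \<in> sets borel" for A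
    unfolding \<nu>_sets using sets_restrict_space_iff[of \<Omega> borel A] \<Omega>b by simp
  have cz: "emeasure \<nu> A = 0" if A: "compact A" "A \<subseteq> \<Omega>" for A
  proof -
    have "emeasure \<nu> A \<le> 0"
    proof (rule ennreal_le_epsilon)
      fix \<epsilon> :: real assume \<epsilon>: "0 < \<epsilon>"
      obtain K where K: "compact K" "K \<subseteq> \<Omega>"
        "\<And>k. (\<integral>\<^sup>+ z\<in>(\<Omega> \<times> \<Omega>) - (K \<times> K). ennreal (a k z) \<partial>(lborel \<Otimes>\<^sub>M lborel)) \<le> ennreal \<epsilon>"
        using tight[OF \<epsilon>] by blast
      obtain u L where u: "u \<in> smooth_fun" "compact L" "L \<subseteq> \<Omega>" "\<And>x. x \<notin> L \<Longrightarrow> u x = 0"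
        "\<And>x. 0 \<le> u x" "\<And>x. u x \<le> 1" "\<And>x. x \<in> K \<union> A \<Longrightarrow> u x = 1"
        using cutoff[OF \<Omega>_open, of "K \<union> A"] K A by blast
      have ut: "u \<in> test_fun \<Omega>" unfolding test_fun_def using u by blast
      note H = test_fun_H1[OF ut]
      define D where "D = dirichlet \<Omega> u"
      have wg: "weak_grad \<Omega> u (wgrad \<Omega> u) \<and> L2v_on \<Omega> (wgrad \<Omega> u)"
        unfolding wgrad_def by (rule someI[of _ "grad u"]) (use H in blast)
      have Dfin: "D < \<infinity>"
      proof -
        let ?g = "\<lambda>x. (norm (wgrad \<Omega> u x))\<^sup>2"
        have "integrable lborel (\<lambda>x. indicator \<Omega> x *\<^sub>R ?g x)"
          using wg unfolding L2v_on_def set_integrable_def by blast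
        then have "(\<integral>\<^sup>+ x. ennreal (norm (indicator \<Omega> x *\<^sub>R ?g x)) \<partial>lborel) < \<infinity>"
          unfolding integrable_iff_bounded by blast
        moreover have "(\<integral>\<^sup>+ x. ennreal (norm (indicator \<Omega> x *\<^sub>R ?g x)) \<partial>lborel) = D"
          unfolding D_def dirichlet_def
          by (rule nn_integral_cong) (auto simp: indicator_def)
        ultimately show ?thesis by simp
      qed
      let ?Fk = "\<lambda>k u. (\<integral>\<^sup>+ z\<in>\<Omega> \<times> \<Omega>. ennreal ((u (fst z) - u (snd z))\<^sup>2 * a k z) \<partial>(lborel \<Otimes>\<^sub>M lborel))
               + dirichlet \<Omega> u"
      have wc: "weak_conv_H1_0 \<Omega> (\<lambda>k. u) u"
        unfolding weak_conv_H1_0_def using H by simp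
      have Fle: "F u \<le> liminf (\<lambda>k. ?Fk k u)"
        using Gamma H(1) wc unfolding Gamma_conv_weak_H1_0_def by blast
      have Fk_le: "?Fk k u \<le> ennreal \<epsilon> + D" for k
      proof -
        have "(\<integral>\<^sup>+ z\<in>\<Omega> \<times> \<Omega>. ennreal ((u (fst z) - u (snd z))\<^sup>2 * a k z) \<partial>(lborel \<Otimes>\<^sub>M lborel))
            \<le> (\<integral>\<^sup>+ z\<in>(\<Omega> \<times> \<Omega>) - (K \<times> K). ennreal (a k z) \<partial>(lborel \<Otimes>\<^sub>M lborel))"
        proof (rule nn_integral_mono)
          fix z :: "(real^'d) \<times> (real^'d)"
          obtain x y where z: "z = (x, y)" by (cases z)
          show "ennreal ((u (fst z) - u (snd z))\<^sup>2 * a k z) * indicator (\<Omega> \<times> \<Omega>) z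
              \<le> ennreal (a k z) * indicator (\<Omega> \<times> \<Omega> - K \<times> K) z"
          proof (cases "z \<in> \<Omega> \<times> \<Omega>")
            case False then show ?thesis by simp
          next
            case True
            show ?thesis
            proof (cases "z \<in> K \<times> K")
              case True then show ?thesis using u(7) z by simp
            next
              case False
              have "(u x - u y)\<^sup>2 \<le> 1" unfolding abs_square_le_1
                using u(5,6)[of x] u(5,6)[of y] by linarith
              then have "(u x - u y)\<^sup>2 * a k z \<le> a k z"
                using a_nonneg[OF \<open>z \<in> \<Omega> \<times> \<Omega>\<close>] by (intro mult_left_le_one_le) auto
              then show ?thesis using False \<open>z \<in> \<Omega> \<times> \<Omega>\<close> z by (simp add: ennreal_leI)
            qed
          qed
        qed
        also have "\<dots> \<le> ennreal \<epsilon>" by (rule K(3))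
        finally show ?thesis unfolding D_def by (rule add_right_mono)
      qed
      have "liminf (\<lambda>k. ?Fk k u) \<le> liminf (\<lambda>k. ennreal \<epsilon> + D)"
        by (rule Liminf_mono) (use Fk_le in auto)
      also have "\<dots> = ennreal \<epsilon> + D" by (rule Liminf_const) simp
      finally have F1: "F u \<le> ennreal \<epsilon> + D" using Fle by simp
      have Am: "A \<in> sets \<nu>" using A nu_iff by (simp add: compact_imp_closed borel_closed)
      have "emeasure \<nu> A = (\<integral>\<^sup>+ x. indicator A x \<partial>\<nu>)" using Am by simp
      also have "\<dots> \<le> (\<integral>\<^sup>+ x. ennreal ((u x)\<^sup>2) \<partial>\<nu>)"
        by (rule nn_integral_mono) (auto simp: indicator_def u(7))
      finally have nuA: "emeasure \<nu> A \<le> (\<integral>\<^sup>+ x. ennreal ((u x)\<^sup>2) \<partial>\<nu>)" .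
      have "emeasure \<nu> A + D \<le> (\<integral>\<^sup>+ x. ennreal ((u x)\<^sup>2) \<partial>\<nu>) + D"
        using nuA by (rule add_right_mono)
      also have "\<dots> \<le> ((\<integral>\<^sup>+ z. ennreal ((u (fst z) - u (snd z))\<^sup>2) \<partial>\<mu>)
            + (\<integral>\<^sup>+ x. ennreal ((u x)\<^sup>2) \<partial>\<nu>)) + D"
        by (rule add_right_mono, rule add_increasing[OF zero_le order_refl])
      also have "\<dots> = F u" unfolding F_repr[OF ut] D_def ..
      finally have "emeasure \<nu> A + D \<le> F u" .
      then have "emeasure \<nu> A + D \<le> ennreal \<epsilon> + D" using F1 by (rule order_trans)
      then show "emeasure \<nu> A \<le> 0 + ennreal \<epsilon>"
        using Dfin ennreal_add_left_cancel_le[of D "emeasure \<nu> A" "ennreal \<epsilon>"] by (auto simp: add.commute)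
    qed
    then show ?thesis by simp
  qed
  obtain C :: "nat \<Rightarrow> (real^'d) set" where C: "\<And>n. compact (C n)" "\<And>n. C n \<subseteq> \<Omega>" "\<Union>(range C) = \<Omega>"
    using open_Union_compact_subsets[OF \<Omega>_open] by metis
  have "emeasure \<nu> (\<Union>n. C n) = 0"
  proof (rule emeasure_UN_eq_0)
    show "emeasure \<nu> (C n) = 0" for n by (rule cz[OF C(1) C(2)])
    have "C n \<in> sets \<nu>" for n
      unfolding nu_iff using C(2)[of n] borel_closed[OF compact_imp_closed[OF C(1)[of n]]] by blast
    then show "range C \<subseteq> sets \<nu>" by blast
  qed
  then have O0: "emeasure \<nu> \<Omega> = 0" using C(3) by simp
  show ?thesis
  proof
    fix A assume "A \<in> sets \<nu>"
    then have "A \<subseteq> \<Omega>" using nu_iff by blast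
    then have "emeasure \<nu> A \<le> emeasure \<nu> \<Omega>"
      by (rule emeasure_mono) (use nu_iff \<Omega>b in auto)
    then show "emeasure \<nu> A = 0" using O0 by simp
  qed
qed

end
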